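(* Let $\kappa\in\mathbb{N}$, $\eta\in\{2,3,\ldots\}\cup\{\infty\}$ and $\pmb{\lambda}=\{\lambda_{-k}\}_{k=0}^{\kappa-1}\cup\{\lambda_{i,1}\}_{i=1}^{\eta}\subset(0,\infty)$. Define $\mathbf{c}_\kappa=(c_0,\ldots,c_{\kappa+1})$ by $c_n=\prod_{j=\kappa-n}^{\kappa-1}\lambda_{-j}^2$ for $n\in\mathbb{N}\cap[0,\kappa]$ (so $c_0=1$, $c_1=\lambda_{-\kappa+1}^2,\ldots,c_\kappa=\prod_{j=0}^{\kappa-1}\lambda_{-j}^2$) and $c_{\kappa+1}=\prod_{j=0}^{\kappa-1}\lambda_{-j}^2\sum_{i=1}^{\eta}\lambda_{i,1}^2$. The following are equivalent: (i) there exists a completely hyperexpansive completion of $\pmb{\lambda}$ on $\mathcal{T}_{\eta,\kappa}$; (ii) $\mathbf{c}_\kappa$ has a completely alternating extension. Moreover, if (i) holds, then $\pmb{\lambda}$ has a $2$-generation flat completely hyperexpansive completion.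
   Context: $\mathcal{T}_{\eta,\kappa}$: vertices $\{-k:k\in\mathbb{N}\cap[0,\kappa]\}\sqcup\{(i,j):i\in\mathbb{N}\cap[1,\eta],j\ge1\}$, edges $(-k,-k+1)$ ($1\le k\le\kappa$), $(0,(i,1))$, $((i,j),(i,j+1))$. A weighted shift with weights $(\lambda_v)$ (weight at vertex $v\neq$ root) and $\sup_v\sum_{u\text{ child of }v}|\lambda_u|^2<\infty$ is $S e_v=\sum_{u\text{ child of }v}\lambda_ue_u$ on $\ell^2$ of the vertex set. A completion of the data is a bounded weighted shift on $\mathcal{T}_{\eta,\kappa}$ whose weights at $-k$ ($k\le\kappa-1$) and at $(i,1)$ equal the given ones. $S$ is $2$-generation flat if $\lambda_{i,j}=\lambda_{1,j}$ for all $j\ge2$ and all $i$. A real sequence $(a_k)_{k\ge0}$ is completely alternating if $\sum_{k=0}^n(-1)^k\binom nk a_{k+m}\le0$ for all $m\ge0$, $n\ge1$; $T$ is completely hyperexpansive if $(\|T^nf\|^2)_n$ is completely alternating for all $f$. A finite sequence $(c_0,\ldots,c_N)$ has a completely alternating extension if there is a completely alternating sequence $(a_k)_{k\ge0}$ with $a_k=c_k$ for $k\le N$. *)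

theory Defs
  imports "HOL-Analysis.Analysis" "HOL-Library.Extended_Nat"
begin

text \<open>Vertices of the tree: Neg k stands for the vertex -k, Br i j for (i,j).\<close>
datatype vtx = Neg nat | Br nat nat

definition tree_V :: "enat \<Rightarrow> nat \<Rightarrow> vtx set" where
  "tree_V \<eta> \<kappa> = {Neg k | k. k \<le> \<kappa>} \<union> {Br i j | i j. 1 \<le> i \<and> enat i \<le> \<eta> \<and> 1 \<le> j}"

text \<open>Parent of a non-root vertex (meaningful only on tree_V minus the root Neg kappa).\<close>
fun parent :: "vtx \<Rightarrow> vtx" where
  "parent (Neg k) = Neg (Suc k)"
| "parent (Br i (Suc 0)) = Neg 0"
| "parent (Br i (Suc (Suc j))) = Br i (Suc j)"
| "parent (Br i 0) = Br i 0"

definition children :: "enat \<Rightarrow> nat \<Rightarrow> vtx \<Rightarrow> vtx set" where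
  "children \<eta> \<kappa> v = {u \<in> tree_V \<eta> \<kappa>. u \<noteq> Neg \<kappa> \<and> parent u = v}"

definition bounded_weights :: "enat \<Rightarrow> nat \<Rightarrow> (vtx \<Rightarrow> complex) \<Rightarrow> bool" where
  "bounded_weights \<eta> \<kappa> w \<longleftrightarrow>
     (\<exists>M. \<forall>v \<in> tree_V \<eta> \<kappa>.
        (\<lambda>u. (cmod (w u))\<^sup>2) summable_on children \<eta> \<kappa> v \<and>
        (\<Sum>\<^sub>\<infinity>u\<in>children \<eta> \<kappa> v. (cmod (w u))\<^sup>2) \<le> M)"

definition ell2_vec :: "enat \<Rightarrow> nat \<Rightarrow> (vtx \<Rightarrow> complex) \<Rightarrow> bool" where
  "ell2_vec \<eta> \<kappa> f \<longleftrightarrow> (\<forall>u. u \<notin> tree_V \<eta> \<kappa> \<longrightarrow> f u = 0) \<and>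
     (\<lambda>u. (cmod (f u))\<^sup>2) summable_on tree_V \<eta> \<kappa>"

definition sqnorm :: "enat \<Rightarrow> nat \<Rightarrow> (vtx \<Rightarrow> complex) \<Rightarrow> real" where
  "sqnorm \<eta> \<kappa> f = (\<Sum>\<^sub>\<infinity>u\<in>tree_V \<eta> \<kappa>. (cmod (f u))\<^sup>2)"

text \<open>The weighted shift: S e_v = sum over children u of w u e_u, i.e. (S f)(u) = w u * f (parent u).\<close>
definition wshift :: "enat \<Rightarrow> nat \<Rightarrow> (vtx \<Rightarrow> complex) \<Rightarrow> (vtx \<Rightarrow> complex) \<Rightarrow> (vtx \<Rightarrow> complex)" where
  "wshift \<eta> \<kappa> w f = (\<lambda>u. if u \<in> tree_V \<eta> \<kappa> \<and> u \<noteq> Neg \<kappa> then w u * f (parent u) else 0)"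

definition completely_alternating :: "(nat \<Rightarrow> real) \<Rightarrow> bool" where
  "completely_alternating a \<longleftrightarrow>
     (\<forall>m n. n \<ge> 1 \<longrightarrow> (\<Sum>k\<le>n. (-1)^k * real (n choose k) * a (k + m)) \<le> 0)"

definition has_CA_extension :: "(nat \<Rightarrow> real) \<Rightarrow> nat \<Rightarrow> bool" where
  "has_CA_extension c N \<longleftrightarrow> (\<exists>a. completely_alternating a \<and> (\<forall>k\<le>N. a k = c k))"

definition comp_hyperexpansive :: "enat \<Rightarrow> nat \<Rightarrow> (vtx \<Rightarrow> complex) \<Rightarrow> bool" where
  "comp_hyperexpansive \<eta> \<kappa> w \<longleftrightarrow>
     (\<forall>f. ell2_vec \<eta> \<kappa> f \<longrightarrow>
        completely_alternating (\<lambda>n. sqnorm \<eta> \<kappa> ((wshift \<eta> \<kappa> w ^^ n) f)))"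

definition is_completion :: "enat \<Rightarrow> nat \<Rightarrow> (vtx \<Rightarrow> real) \<Rightarrow> (vtx \<Rightarrow> complex) \<Rightarrow> bool" where
  "is_completion \<eta> \<kappa> lam w \<longleftrightarrow> bounded_weights \<eta> \<kappa> w \<and>
     (\<forall>k<\<kappa>. w (Neg k) = complex_of_real (lam (Neg k))) \<and>
     (\<forall>i. 1 \<le> i \<and> enat i \<le> \<eta> \<longrightarrow> w (Br i 1) = complex_of_real (lam (Br i 1)))"

definition two_gen_flat :: "enat \<Rightarrow> (vtx \<Rightarrow> complex) \<Rightarrow> bool" where
  "two_gen_flat \<eta> w \<longleftrightarrow> (\<forall>i j. 1 \<le> i \<and> enat i \<le> \<eta> \<and> j \<ge> 2 \<longrightarrow> w (Br i j) = w (Br 1 j))"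

definition cseq :: "enat \<Rightarrow> nat \<Rightarrow> (vtx \<Rightarrow> real) \<Rightarrow> nat \<Rightarrow> real" where
  "cseq \<eta> \<kappa> lam n =
     (if n \<le> \<kappa> then (\<Prod>j\<in>{\<kappa> - n..<\<kappa>}. (lam (Neg j))\<^sup>2)
      else (\<Prod>j<\<kappa>. (lam (Neg j))\<^sup>2) *
           (\<Sum>\<^sub>\<infinity>i\<in>{i. 1 \<le> i \<and> enat i \<le> \<eta>}. (lam (Br i 1))\<^sup>2))"

end

theory Submission
  imports Defs
begin

definition dep :: "nat \<Rightarrow> vtx \<Rightarrow> nat" where
  "dep \<kappa> u = (case u of Neg k \<Rightarrow> \<kappa> - k | Br i j \<Rightarrow> \<kappa> + j)"

definition anc :: "nat \<Rightarrow> vtx \<Rightarrow> vtx" where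
  "anc n u = (parent ^^ n) u"

lemma mem_V: "u \<in> tree_V \<eta> \<kappa> \<longleftrightarrow> (\<exists>k. u = Neg k \<and> k \<le> \<kappa>) \<or> (\<exists>i j. u = Br i j \<and> 1 \<le> i \<and> enat i \<le> \<eta> \<and> 1 \<le> j)"
  unfolding tree_V_def by auto

lemma Neg_V[simp]: "Neg k \<in> tree_V \<eta> \<kappa> \<longleftrightarrow> k \<le> \<kappa>"
  unfolding tree_V_def by auto

lemma Br_V[simp]: "Br i j \<in> tree_V \<eta> \<kappa> \<longleftrightarrow> 1 \<le> i \<and> enat i \<le> \<eta> \<and> 1 \<le> j"
  unfolding tree_V_def by auto

lemma parent_V:
  assumes "u \<in> tree_V \<eta> \<kappa>" "u \<noteq> Neg \<kappa>"
  shows "parent u \<in> tree_V \<eta> \<kappa> \<and> dep \<kappa> (parent u) = dep \<kappa> u - 1 \<and> 1 \<le> dep \<kappa> u"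
proof (cases u)
  case (Neg k)
  then show ?thesis using assms by (auto simp: dep_def)
next
  case (Br i j)
  then obtain j' where j: "j = Suc j'" using assms by (cases j) auto
  show ?thesis
  proof (cases j')
    case 0 then show ?thesis using assms Br j by (auto simp: dep_def)
  next
    case (Suc j'') then show ?thesis using assms Br j by (auto simp: dep_def)
  qed
qed

lemma dep0: "u \<in> tree_V \<eta> \<kappa> \<Longrightarrow> dep \<kappa> u = 0 \<longleftrightarrow> u = Neg \<kappa>"
  by (auto simp: mem_V dep_def)

lemma anc_0[simp]: "anc 0 u = u" by (simp add: anc_def)
lemma anc_Suc: "anc (Suc n) u = parent (anc n u)" by (simp add: anc_def)
lemma anc_Suc': "anc (Suc n) u = anc n (parent u)" by (simp only: anc_def funpow_Suc_right comp_def)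

lemma anc_V:
  assumes "u \<in> tree_V \<eta> \<kappa>" "N \<le> dep \<kappa> u"
  shows "anc N u \<in> tree_V \<eta> \<kappa> \<and> dep \<kappa> (anc N u) = dep \<kappa> u - N"
  using assms(2)
proof (induction N)
  case 0 then show ?case using assms by simp
next
  case (Suc N)
  then have IH: "anc N u \<in> tree_V \<eta> \<kappa>" "dep \<kappa> (anc N u) = dep \<kappa> u - N" by auto
  have "anc N u \<noteq> Neg \<kappa>" using IH Suc.prems dep0[OF IH(1)] by auto
  from parent_V[OF IH(1) this] IH show ?case by (simp add: anc_Suc)
qed

lemma anc_Neg: "anc N (Neg k) = Neg (k + N)"
  by (induction N) (auto simp: anc_Suc)

lemma anc_Br: "1 \<le> j \<Longrightarrow> anc N (Br i j) = (if N < j then Br i (j - N) else Neg (N - j))"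
proof (induction N)
  case 0 then show ?case by simp
next
  case (Suc N)
  show ?case
  proof (cases "Suc N < j")
    case True
    define t where "t = j - N - 2"
    have t: "j - N = Suc (Suc t)" using True unfolding t_def by arith
    then have t2: "j - Suc N = Suc t" by arith
    have "anc N (Br i j) = Br i (j - N)" using Suc True by simp
    then show ?thesis using True t t2 by (simp only: anc_Suc parent.simps if_True)
  next
    case False
    show ?thesis
    proof (cases "Suc N = j")
      case True
      then have "anc N (Br i j) = Br i (Suc 0)" using Suc by simp
      then have "anc (Suc N) (Br i j) = Neg 0" by (simp only: anc_Suc parent.simps)
      then show ?thesis using True by simp
    next
      case False2: False
      then have "anc N (Br i j) = Neg (N - j)" using Suc False by simp
      moreover have "Suc (N - j) = Suc N - j" using False False2 by arith
      ultimately show ?thesis using False by (simp add: anc_Suc)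
    qed
  qed
qed

definition Wp :: "(vtx \<Rightarrow> complex) \<Rightarrow> nat \<Rightarrow> vtx \<Rightarrow> complex" where
  "Wp w N u = (\<Prod>m<N. w (anc m u))"

lemma Wp_Suc: "Wp w (Suc N) u = w u * Wp w N (parent u)"
  unfolding Wp_def prod.lessThan_Suc_shift by (simp add: anc_Suc' del: prod.lessThan_Suc)

lemma Spow:
  assumes f0: "\<And>u. u \<notin> tree_V \<eta> \<kappa> \<Longrightarrow> f u = 0"
  shows "(wshift \<eta> \<kappa> w ^^ N) f u =
     (if u \<in> tree_V \<eta> \<kappa> \<and> N \<le> dep \<kappa> u then Wp w N u * f (anc N u) else 0)"
proof (induction N arbitrary: u)
  case 0 then show ?case using f0 by (simp add: Wp_def) 
next
  case (Suc N)
  show ?case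
  proof (cases "u \<in> tree_V \<eta> \<kappa> \<and> u \<noteq> Neg \<kappa>")
    case True
    from parent_V[of u \<eta> \<kappa>] True have P: "parent u \<in> tree_V \<eta> \<kappa>" "dep \<kappa> (parent u) = dep \<kappa> u - 1" "1 \<le> dep \<kappa> u" by auto
    have "(wshift \<eta> \<kappa> w ^^ Suc N) f u = w u * (wshift \<eta> \<kappa> w ^^ N) f (parent u)"
      using True by (simp add: wshift_def)
    also have "\<dots> = (if Suc N \<le> dep \<kappa> u then Wp w (Suc N) u * f (anc (Suc N) u) else 0)"
      using P by (auto simp: Suc Wp_Suc anc_Suc')
    finally show ?thesis using True by simp
  next
    case False
    then show ?thesis using dep0[of u \<eta> \<kappa>] by (auto simp: wshift_def)
  qed
qed

lemma regroup:
  fixes g :: "'a \<Rightarrow> real" and \<phi> :: "'a \<Rightarrow> 'b"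
  assumes nn: "\<And>u. u \<in> U \<Longrightarrow> g u \<ge> 0"
    and im: "\<And>u. u \<in> U \<Longrightarrow> \<phi> u \<in> A"
    and fib: "\<And>a. a \<in> A \<Longrightarrow> (g has_sum b a) {u. u \<in> U \<and> \<phi> u = a}"
    and bs: "b summable_on A"
  shows "(g has_sum infsum b A) U"
proof -
  define B where "B a = {u. u \<in> U \<and> \<phi> u = a}" for a
  have fib: "\<And>a. a \<in> A \<Longrightarrow> (g has_sum b a) (B a)" using fib unfolding B_def by simp
  define S where "S = Sigma A (\<lambda>a. (B a))"
  define F where "F = (\<lambda>(x::'b\<times>'a). g (snd x))"
  have inner: "Infinite_Sum.abs_summable_on (\<lambda>y. F (x, y)) (B x)" if "x \<in> A" for x
  proof -
    have "(\<lambda>y. F (x, y)) summable_on (B x)"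
      using fib[OF that] by (auto simp: F_def summable_on_def)
    then show ?thesis by (rule summable_on_iff_abs_summable_on_real[THEN iffD1])
  qed
  have innereq: "infsum (\<lambda>y. norm (F (x, y))) (B x) = b x" if "x \<in> A" for x
  proof -
    have "infsum (\<lambda>y. norm (F (x, y))) (B x) = infsum g (B x)"
      by (rule infsum_cong) (use nn in \<open>auto simp: F_def B_def\<close>)
    also have "\<dots> = b x" using fib[OF that] by (simp add: has_sum_iff)
    finally show ?thesis .
  qed
  have outer: "Infinite_Sum.abs_summable_on (\<lambda>x. infsum (\<lambda>y. norm (F (x, y))) (B x)) A"
  proof -
    have "(\<lambda>x. infsum (\<lambda>y. norm (F (x, y))) (B x)) summable_on A"
      using bs summable_on_cong[of A "(\<lambda>x. infsum (\<lambda>y. norm (F (x, y))) (B x))" b] innereq by simp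
    then show ?thesis by (rule summable_on_iff_abs_summable_on_real[THEN iffD1])
  qed
  have absS: "Infinite_Sum.abs_summable_on F S"
    unfolding S_def by (rule Infinite_Sum.abs_summable_on_Sigma_iff[THEN iffD2]) (use inner outer in fast)
  then have sumS: "F summable_on S" by (rule abs_summable_summable)
  have "infsum (\<lambda>x. infsum (\<lambda>y. F (x,y)) (B x)) A = infsum F S"
    unfolding S_def by (rule infsum_Sigma_banach) (use sumS S_def in simp)
  moreover have "infsum (\<lambda>x. infsum (\<lambda>y. F (x,y)) (B x)) A = infsum b A"
    by (rule infsum_cong) (use fib in \<open>auto simp: F_def has_sum_iff\<close>)
  ultimately have "(F has_sum infsum b A) S" using sumS by (simp add: has_sum_iff)
  moreover have "inj_on snd S" unfolding S_def B_def by (auto simp: inj_on_def)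
  moreover have "snd ` S = U"
  proof
    show "snd ` S \<subseteq> U" unfolding S_def B_def by auto
    show "U \<subseteq> snd ` S"
    proof
      fix u assume u: "u \<in> U"
      then have "(\<phi> u, u) \<in> S" unfolding S_def B_def using im by simp
      then show "u \<in> snd ` S" by (metis snd_conv image_eqI)
    qed
  qed
  moreover have "F = g \<circ> snd" unfolding F_def by auto
  ultimately show ?thesis using has_sum_reindex[of snd S g "infsum b A"] by simp
qed

lemma has_sum_finsum:
  fixes f :: "'i \<Rightarrow> 'a \<Rightarrow> real"
  assumes "finite K" "\<And>k. k \<in> K \<Longrightarrow> (f k has_sum s k) A"
  shows "((\<lambda>x. \<Sum>k\<in>K. f k x) has_sum (\<Sum>k\<in>K. s k)) A"
  using assms
proof (induction K rule: finite_induct)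
  case empty then show ?case by simp
next
  case (insert k K)
  then have "((\<lambda>x. f k x + (\<Sum>k\<in>K. f k x)) has_sum (s k + (\<Sum>k\<in>K. s k))) A"
    by (intro has_sum_add) auto
  then show ?case using insert by simp
qed

abbreviation Iset :: "enat \<Rightarrow> nat set" where
  "Iset \<eta> \<equiv> {i. 1 \<le> i \<and> enat i \<le> \<eta>}"

lemma children_Neg0: "children \<eta> \<kappa> (Neg 0) = (\<lambda>i. Br i 1) ` Iset \<eta>"
proof
  show "children \<eta> \<kappa> (Neg 0) \<subseteq> (\<lambda>i. Br i 1) ` Iset \<eta>"
  proof
    fix u assume u: "u \<in> children \<eta> \<kappa> (Neg 0)"
    then have uV: "u \<in> tree_V \<eta> \<kappa>" and p: "parent u = Neg 0" by (auto simp: children_def)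
    show "u \<in> (\<lambda>i. Br i 1) ` Iset \<eta>"
    proof (cases u)
      case (Neg k) then show ?thesis using p by simp
    next
      case (Br i j)
      then obtain j' where j: "j = Suc j'" using uV by (cases j) auto
      show ?thesis
      proof (cases j')
        case 0 then show ?thesis using Br j uV by auto
      next
        case (Suc t) then show ?thesis using Br j p by simp
      qed
    qed
  qed
  show "(\<lambda>i. Br i 1) ` Iset \<eta> \<subseteq> children \<eta> \<kappa> (Neg 0)"
    by (auto simp: children_def)
qed

lemma sq_Spow_e:
  fixes w :: "vtx \<Rightarrow> complex" and \<eta> :: enat and \<kappa> :: nat
  defines "e \<equiv> (\<lambda>u. if u = Neg \<kappa> then (1::complex) else 0)"
  shows "(cmod ((wshift \<eta> \<kappa> w ^^ n) e u))\<^sup>2 =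
           (if u \<in> tree_V \<eta> \<kappa> \<and> dep \<kappa> u = n then (cmod (Wp w n u))\<^sup>2 else 0)"
proof -
  have f0: "\<And>u. u \<notin> tree_V \<eta> \<kappa> \<Longrightarrow> e u = 0" unfolding e_def by auto
  show ?thesis
  proof (cases "u \<in> tree_V \<eta> \<kappa> \<and> n \<le> dep \<kappa> u")
    case True
    then have A: "anc n u \<in> tree_V \<eta> \<kappa>" "dep \<kappa> (anc n u) = dep \<kappa> u - n"
      using anc_V by auto
    have "anc n u = Neg \<kappa> \<longleftrightarrow> dep \<kappa> u = n" using dep0[OF A(1)] A(2) True by auto
    then show ?thesis using True Spow[OF f0, where w=w and N=n and u=u] unfolding e_def by auto
  next
    case False
    then show ?thesis using Spow[OF f0, where w=w and N=n and u=u] by auto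
  qed
qed

lemma Wp_Neg_chain:
  assumes "n \<le> \<kappa>"
  shows "(cmod (Wp w n (Neg (\<kappa> - n))))\<^sup>2 = (\<Prod>j\<in>{\<kappa> - n..<\<kappa>}. (cmod (w (Neg j)))\<^sup>2)"
proof -
  have "(cmod (Wp w n (Neg (\<kappa> - n))))\<^sup>2 = (\<Prod>m<n. (cmod (w (Neg (\<kappa> - n + m))))\<^sup>2)"
    unfolding Wp_def anc_Neg prod_norm[symmetric] prod_power_distrib by simp
  also have "\<dots> = (\<Prod>m\<in>{0..<n}. (cmod (w (Neg (m + (\<kappa> - n)))))\<^sup>2)"
    by (simp add: atLeast0LessThan add.commute)
  also have "\<dots> = (\<Prod>j\<in>{0 + (\<kappa> - n)..<n + (\<kappa> - n)}. (cmod (w (Neg j)))\<^sup>2)"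
    by (rule prod.shift_bounds_nat_ivl[symmetric])
  also have "{0 + (\<kappa> - n)..<n + (\<kappa> - n)} = {\<kappa> - n..<\<kappa>}" using assms by simp
  finally show ?thesis .
qed

lemma dirA:
  assumes comp: "is_completion \<eta> \<kappa> lam w" and ch: "comp_hyperexpansive \<eta> \<kappa> w"
  shows "(\<lambda>i. (lam (Br i 1))\<^sup>2) summable_on Iset \<eta> \<and> has_CA_extension (cseq \<eta> \<kappa> lam) (\<kappa> + 1)"
proof
  have bw: "bounded_weights \<eta> \<kappa> w" and wN: "\<And>k. k < \<kappa> \<Longrightarrow> w (Neg k) = complex_of_real (lam (Neg k))"
    and wB: "\<And>i. i \<in> Iset \<eta> \<Longrightarrow> w (Br i 1) = complex_of_real (lam (Br i 1))"
    using comp unfolding is_completion_def by auto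
  have wB2: "(cmod (w (Br i 1)))\<^sup>2 = (lam (Br i 1))\<^sup>2" if "i \<in> Iset \<eta>" for i
    using wB[OF that] by simp
  have "(\<lambda>u. (cmod (w u))\<^sup>2) summable_on children \<eta> \<kappa> (Neg 0)"
    using bw unfolding bounded_weights_def by (meson Neg_V zero_le)
  then have "(\<lambda>u. (cmod (w u))\<^sup>2) summable_on (\<lambda>i. Br i 1) ` Iset \<eta>" by (simp add: children_Neg0)
  then have "((\<lambda>u. (cmod (w u))\<^sup>2) \<circ> (\<lambda>i. Br i 1)) summable_on Iset \<eta>"
    by (subst summable_on_reindex[symmetric]) (auto simp: inj_on_def)
  then show summ: "(\<lambda>i. (lam (Br i 1))\<^sup>2) summable_on Iset \<eta>"
    using summable_on_cong[of "Iset \<eta>" "(\<lambda>u. (cmod (w u))\<^sup>2) \<circ> (\<lambda>i. Br i 1)" "\<lambda>i. (lam (Br i 1))\<^sup>2"] wB2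
    by simp
  define e where "e = (\<lambda>u. if u = Neg \<kappa> then (1::complex) else 0)"
  have ell: "ell2_vec \<eta> \<kappa> e"
    unfolding ell2_vec_def
  proof
    show "\<forall>u. u \<notin> tree_V \<eta> \<kappa> \<longrightarrow> e u = 0" unfolding e_def by auto
    have "(\<lambda>u. (cmod (e u))\<^sup>2) summable_on {Neg \<kappa>}" by simp
    then show "(\<lambda>u. (cmod (e u))\<^sup>2) summable_on tree_V \<eta> \<kappa>"
      by (subst summable_on_cong_neutral[of "{Neg \<kappa>}" "tree_V \<eta> \<kappa>" "\<lambda>u. (cmod (e u))\<^sup>2"]) (auto simp: e_def)
  qed
  define a where "a = (\<lambda>n. sqnorm \<eta> \<kappa> ((wshift \<eta> \<kappa> w ^^ n) e))"
  have CA: "completely_alternating a" using ch ell unfolding comp_hyperexpansive_def a_def by blast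
  have sqe: "\<And>n u. (cmod ((wshift \<eta> \<kappa> w ^^ n) e u))\<^sup>2 =
           (if u \<in> tree_V \<eta> \<kappa> \<and> dep \<kappa> u = n then (cmod (Wp w n u))\<^sup>2 else 0)"
    unfolding e_def by (rule sq_Spow_e)
  have chain: "a n = (\<Prod>j\<in>{\<kappa> - n..<\<kappa>}. (lam (Neg j))\<^sup>2)" if n: "n \<le> \<kappa>" for n
  proof -
    have "a n = infsum (\<lambda>u. (cmod ((wshift \<eta> \<kappa> w ^^ n) e u))\<^sup>2) {Neg (\<kappa> - n)}"
      unfolding a_def sqnorm_def
      by (rule infsum_cong_neutral) (use n in \<open>auto simp: sqe dep_def mem_V\<close>)
    also have "\<dots> = (cmod (Wp w n (Neg (\<kappa> - n))))\<^sup>2" using n by (simp add: sqe dep_def)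
    also have "\<dots> = (\<Prod>j\<in>{\<kappa> - n..<\<kappa>}. (cmod (w (Neg j)))\<^sup>2)" by (rule Wp_Neg_chain[OF n])
    also have "\<dots> = (\<Prod>j\<in>{\<kappa> - n..<\<kappa>}. (lam (Neg j))\<^sup>2)"
      by (rule prod.cong) (auto simp: wN)
    finally show ?thesis .
  qed
  have last: "a (\<kappa> + 1) = (\<Prod>j<\<kappa>. (lam (Neg j))\<^sup>2) * infsum (\<lambda>i. (lam (Br i 1))\<^sup>2) (Iset \<eta>)"
  proof -
    define C where "C = (\<Prod>j<\<kappa>. (lam (Neg j))\<^sup>2)"
    have C: "(cmod (Wp w \<kappa> (Neg 0)))\<^sup>2 = C"
      using Wp_Neg_chain[of \<kappa> \<kappa> w] unfolding C_def
      by (simp add: wN atLeast0LessThan)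
    have "a (\<kappa> + 1) = infsum (\<lambda>u. (cmod ((wshift \<eta> \<kappa> w ^^ (\<kappa> + 1)) e u))\<^sup>2) ((\<lambda>i. Br i 1) ` Iset \<eta>)"
      unfolding a_def sqnorm_def
      by (rule infsum_cong_neutral) (auto simp: sqe dep_def mem_V simp del: funpow.simps)
    also have "\<dots> = infsum ((\<lambda>u. (cmod ((wshift \<eta> \<kappa> w ^^ (\<kappa> + 1)) e u))\<^sup>2) \<circ> (\<lambda>i. Br i 1)) (Iset \<eta>)"
      by (rule infsum_reindex) (auto simp: inj_on_def)
    also have "\<dots> = infsum (\<lambda>i. (lam (Br i 1))\<^sup>2 * C) (Iset \<eta>)"
    proof (rule infsum_cong)
      fix i assume i: "i \<in> Iset \<eta>"
      have "Wp w (\<kappa> + 1) (Br i 1) = w (Br i 1) * Wp w \<kappa> (Neg 0)"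
        using Wp_Suc[of w \<kappa> "Br i 1"] by simp
      then show "((\<lambda>u. (cmod ((wshift \<eta> \<kappa> w ^^ (\<kappa> + 1)) e u))\<^sup>2) \<circ> (\<lambda>i. Br i 1)) i = (lam (Br i 1))\<^sup>2 * C"
        using i C wB2[OF i] by (simp add: sqe dep_def norm_mult power_mult_distrib del: funpow.simps)
    qed
    also have "\<dots> = C * infsum (\<lambda>i. (lam (Br i 1))\<^sup>2) (Iset \<eta>)"
      using infsum_cmult_left'[of "\<lambda>i. (lam (Br i 1))\<^sup>2" C "Iset \<eta>"] by (simp only: mult.commute)
    finally show ?thesis unfolding C_def .
  qed
  show "has_CA_extension (cseq \<eta> \<kappa> lam) (\<kappa> + 1)"
    unfolding has_CA_extension_def
  proof (intro exI conjI allI impI)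
    show "completely_alternating a" by (rule CA)
    fix k assume k: "k \<le> \<kappa> + 1"
    show "a k = cseq \<eta> \<kappa> lam k"
    proof (cases "k \<le> \<kappa>")
      case True then show ?thesis by (simp add: chain cseq_def)
    next
      case False then have "k = \<kappa> + 1" using k by simp
      then show ?thesis using last by (simp add: cseq_def)
    qed
  qed
qed

lemma CA1: "completely_alternating a \<Longrightarrow> a m \<le> a (Suc m)"
  unfolding completely_alternating_def
  by (erule allE[of _ m], erule allE[of _ 1]) simp

lemma CA2: "completely_alternating a \<Longrightarrow> a (Suc (Suc m)) - a (Suc m) \<le> a (Suc m) - a m"
  unfolding completely_alternating_def
  by (erule allE[of _ m], erule allE[of _ 2]) (simp add: numeral_2_eq_2)

lemma CA_ge1:
  assumes "completely_alternating a" "a 0 = 1"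
  shows "a n \<ge> 1"
  by (induction n) (use assms CA1[OF assms(1)] in \<open>auto intro: order_trans\<close>)

lemma CA_diff_le:
  assumes "completely_alternating a"
  shows "a (Suc m) - a m \<le> a 1 - a 0"
proof (induction m)
  case (Suc m)
  have "a (Suc (Suc m)) - a (Suc m) \<le> a (Suc m) - a m" by (rule CA2[OF assms])
  then show ?case using Suc by linarith
qed simp

lemma CA_ratio:
  assumes "completely_alternating a" "a 0 = 1"
  shows "a (d + N) \<le> a 1 ^ N * a d"
proof (induction N)
  case 0 then show ?case by simp
next
  case (Suc N)
  have g: "a (d + N) \<ge> 1" using CA_ge1[OF assms] by blast
  have D: "a (Suc (d + N)) - a (d + N) \<le> a 1 - 1" using CA_diff_le[OF assms(1)] assms(2) by simp
  have D0: "a 1 - 1 \<ge> 0" using CA1[OF assms(1), of 0] assms(2) by simp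
  have "a (d + Suc N) \<le> a (d + N) + (a 1 - 1)" using D by simp
  also have "\<dots> \<le> a (d + N) + (a 1 - 1) * a (d + N)" using D0 g
    by (simp add: mult_le_cancel_left1)
  also have "\<dots> = a 1 * a (d + N)" by (simp add: algebra_simps)
  also have "\<dots> \<le> a 1 * (a 1 ^ N * a d)" using Suc D0 by (simp add: mult_left_mono)
  finally show ?case by simp
qed

lemma fib_Neg_le:
  assumes "k \<le> \<kappa>" "N \<le> k"
  shows "{u. u \<in> {u. u \<in> tree_V \<eta> \<kappa> \<and> N \<le> dep \<kappa> u} \<and> anc N u = Neg k} = {Neg (k - N)}"
proof (rule set_eqI)
  fix u show "u \<in> {u. u \<in> {u. u \<in> tree_V \<eta> \<kappa> \<and> N \<le> dep \<kappa> u} \<and> anc N u = Neg k} \<longleftrightarrow> u \<in> {Neg (k - N)}"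
  proof (cases u)
    case (Neg k') then show ?thesis using assms by (auto simp: anc_Neg dep_def)
  next
    case (Br i' j') then show ?thesis using assms by (auto simp: anc_Br dep_def split: if_splits)
  qed
qed

lemma fib_Neg_gt:
  assumes "k \<le> \<kappa>" "k < N"
  shows "{u. u \<in> {u. u \<in> tree_V \<eta> \<kappa> \<and> N \<le> dep \<kappa> u} \<and> anc N u = Neg k} = (\<lambda>i. Br i (N - k)) ` Iset \<eta>"
proof (rule set_eqI)
  fix u show "u \<in> {u. u \<in> {u. u \<in> tree_V \<eta> \<kappa> \<and> N \<le> dep \<kappa> u} \<and> anc N u = Neg k} \<longleftrightarrow> u \<in> (\<lambda>i. Br i (N - k)) ` Iset \<eta>"
  proof (cases u)
    case (Neg k') then show ?thesis using assms by (auto simp: anc_Neg dep_def)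
  next
    case (Br i' j')
    show ?thesis
    proof
      assume "u \<in> {u. u \<in> {u. u \<in> tree_V \<eta> \<kappa> \<and> N \<le> dep \<kappa> u} \<and> anc N u = Neg k}"
      then have "i' \<in> Iset \<eta>" "j' \<ge> 1" "anc N (Br i' j') = Neg k" using Br by auto
      then have "j' = N - k" by (auto simp: anc_Br split: if_splits)
      then show "u \<in> (\<lambda>i. Br i (N - k)) ` Iset \<eta>" using Br \<open>i' \<in> Iset \<eta>\<close> by auto
    next
      assume "u \<in> (\<lambda>i. Br i (N - k)) ` Iset \<eta>"
      then have "i' \<in> Iset \<eta>" "j' = N - k" using Br by auto
      then show "u \<in> {u. u \<in> {u. u \<in> tree_V \<eta> \<kappa> \<and> N \<le> dep \<kappa> u} \<and> anc N u = Neg k}"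
        using Br assms by (auto simp: anc_Br dep_def)
    qed
  qed
qed

lemma fib_Br:
  assumes "i \<in> Iset \<eta>" "1 \<le> j"
  shows "{u. u \<in> {u. u \<in> tree_V \<eta> \<kappa> \<and> N \<le> dep \<kappa> u} \<and> anc N u = Br i j} = {Br i (j + N)}"
proof (rule set_eqI)
  fix u show "u \<in> {u. u \<in> {u. u \<in> tree_V \<eta> \<kappa> \<and> N \<le> dep \<kappa> u} \<and> anc N u = Br i j} \<longleftrightarrow> u \<in> {Br i (j + N)}"
  proof (cases u)
    case (Neg k') then show ?thesis using assms by (auto simp: anc_Neg dep_def)
  next
    case (Br i' j') then show ?thesis using assms by (auto simp: anc_Br dep_def split: if_splits)
  qed
qed

definition sS :: "enat \<Rightarrow> (vtx \<Rightarrow> real) \<Rightarrow> real" where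
  "sS \<eta> lam = infsum (\<lambda>i. (lam (Br i 1))\<^sup>2) (Iset \<eta>)"

definition wc :: "nat \<Rightarrow> (vtx \<Rightarrow> real) \<Rightarrow> (nat \<Rightarrow> real) \<Rightarrow> vtx \<Rightarrow> complex" where
  "wc \<kappa> lam a u = (case u of Neg k \<Rightarrow> complex_of_real (lam (Neg k))
     | Br i j \<Rightarrow> if j = 1 then complex_of_real (lam (Br i 1))
                else complex_of_real (sqrt (a (\<kappa> + j) / a (\<kappa> + j - 1))))"

definition pp :: "enat \<Rightarrow> (vtx \<Rightarrow> real) \<Rightarrow> vtx \<Rightarrow> real" where
  "pp \<eta> lam u = (case u of Neg k \<Rightarrow> 1 | Br i j \<Rightarrow> (lam (Br i 1))\<^sup>2 / sS \<eta> lam)"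

context
  fixes \<eta> :: enat and \<kappa> :: nat and lam :: "vtx \<Rightarrow> real" and a :: "nat \<Rightarrow> real"
  assumes eta: "\<eta> \<ge> 2"
    and lamN: "\<forall>k<\<kappa>. lam (Neg k) > 0"
    and lamB: "\<forall>i. 1 \<le> i \<and> enat i \<le> \<eta> \<longrightarrow> lam (Br i 1) > 0"
    and summ: "(\<lambda>i. (lam (Br i 1))\<^sup>2) summable_on Iset \<eta>"
    and CA: "completely_alternating a"
    and ext: "\<forall>k\<le>\<kappa> + 1. a k = cseq \<eta> \<kappa> lam k"
begin

lemma a0: "a 0 = 1"
  using ext by (simp add: cseq_def)

lemma apos: "a n \<ge> 1"
  by (rule CA_ge1[OF CA a0])

lemma spos: "sS \<eta> lam > 0"
proof -
  have "(1::enat) \<le> 2" by simp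
  then have "(1::enat) \<le> \<eta>" using eta by (rule order_trans)
  then have one: "1 \<in> Iset \<eta>" by (simp add: one_enat_def)
  have "sum (\<lambda>i. (lam (Br i 1))\<^sup>2) {1} \<le> sS \<eta> lam"
    unfolding sS_def by (rule finite_sum_le_infsum[OF summ]) (use one in auto)
  moreover have "lam (Br 1 1) > 0" using lamB one by auto
  moreover have "sum (\<lambda>i. (lam (Br i 1))\<^sup>2) {1} = (lam (Br 1 1))\<^sup>2" by simp
  ultimately show ?thesis by (smt (verit) zero_less_power)
qed

lemma LI:
  assumes uV: "u \<in> tree_V \<eta> \<kappa>" and ur: "u \<noteq> Neg \<kappa>"
  shows "(cmod (wc \<kappa> lam a u))\<^sup>2 * a (dep \<kappa> u - 1) * pp \<eta> lam (parent u) = a (dep \<kappa> u) * pp \<eta> lam u"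
proof (cases u)
  case (Neg k)
  then have k: "k < \<kappa>" using uV ur by auto
  have e1: "a (\<kappa> - k) = (\<Prod>j\<in>{k..<\<kappa>}. (lam (Neg j))\<^sup>2)"
    using ext k by (simp add: cseq_def)
  have e2: "a (\<kappa> - k - 1) = (\<Prod>j\<in>{Suc k..<\<kappa>}. (lam (Neg j))\<^sup>2)"
    using ext k by (simp add: cseq_def Suc_diff_Suc)
  have "(\<Prod>j\<in>{k..<\<kappa>}. (lam (Neg j))\<^sup>2) = (lam (Neg k))\<^sup>2 * (\<Prod>j\<in>{Suc k..<\<kappa>}. (lam (Neg j))\<^sup>2)"
    using k by (rule prod.atLeast_Suc_lessThan)
  then show ?thesis using Neg e1 e2 by (simp add: wc_def pp_def dep_def)
next
  case (Br i j)
  then have i: "i \<in> Iset \<eta>" and j: "j \<ge> 1" using uV by auto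
  show ?thesis
  proof (cases "j = 1")
    case True
    have e1: "a \<kappa> = (\<Prod>j<\<kappa>. (lam (Neg j))\<^sup>2)"
      using ext by (simp add: cseq_def atLeast0LessThan)
    have e2: "a (\<kappa> + 1) = (\<Prod>j<\<kappa>. (lam (Neg j))\<^sup>2) * sS \<eta> lam"
      using ext by (simp add: cseq_def sS_def)
    show ?thesis using Br True e1 e2 spos by (simp add: wc_def pp_def dep_def)
  next
    case False
    define t where "t = j - 2"
    have t: "j = Suc (Suc t)" using j False unfolding t_def by arith
    have pos: "a (\<kappa> + j) / a (\<kappa> + j - 1) \<ge> 0" using apos[of "\<kappa> + j"] apos[of "\<kappa> + j - 1"] by simp
    have "(cmod (wc \<kappa> lam a u))\<^sup>2 = a (\<kappa> + j) / a (\<kappa> + j - 1)"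
      using Br False pos by (simp add: wc_def)
    moreover have "pp \<eta> lam (parent u) = pp \<eta> lam u" using Br t by (simp add: pp_def)
    moreover have "a (\<kappa> + j - 1) \<noteq> 0" using apos[of "\<kappa> + j - 1"] by simp
    ultimately show ?thesis using Br by (simp add: dep_def)
  qed
qed

lemma TEL:
  assumes "u \<in> tree_V \<eta> \<kappa>" "N \<le> dep \<kappa> u"
  shows "(cmod (Wp (wc \<kappa> lam a) N u))\<^sup>2 * a (dep \<kappa> u - N) * pp \<eta> lam (anc N u) = a (dep \<kappa> u) * pp \<eta> lam u"
  using assms
proof (induction N arbitrary: u)
  case 0 then show ?case by (simp add: Wp_def)
next
  case (Suc N)
  have ur: "u \<noteq> Neg \<kappa>" using Suc.prems dep0[of u \<eta> \<kappa>] by auto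
  from parent_V[OF Suc.prems(1) ur] have P: "parent u \<in> tree_V \<eta> \<kappa>" "dep \<kappa> (parent u) = dep \<kappa> u - 1" by auto
  have IH: "(cmod (Wp (wc \<kappa> lam a) N (parent u)))\<^sup>2 * a (dep \<kappa> (parent u) - N) * pp \<eta> lam (anc N (parent u))
           = a (dep \<kappa> (parent u)) * pp \<eta> lam (parent u)"
    using Suc.IH[OF P(1)] P(2) Suc.prems(2) by simp
  have "(cmod (Wp (wc \<kappa> lam a) (Suc N) u))\<^sup>2 * a (dep \<kappa> u - Suc N) * pp \<eta> lam (anc (Suc N) u)
      = (cmod (wc \<kappa> lam a u))\<^sup>2 * ((cmod (Wp (wc \<kappa> lam a) N (parent u)))\<^sup>2 * a (dep \<kappa> (parent u) - N) * pp \<eta> lam (anc N (parent u)))"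
    using P(2) by (simp add: Wp_Suc anc_Suc' norm_mult power_mult_distrib)
  also have "\<dots> = (cmod (wc \<kappa> lam a u))\<^sup>2 * a (dep \<kappa> u - 1) * pp \<eta> lam (parent u)"
    using IH P(2) by simp
  also have "\<dots> = a (dep \<kappa> u) * pp \<eta> lam u" by (rule LI[OF Suc.prems(1) ur])
  finally show ?case .
qed

lemma ppos: "u \<in> tree_V \<eta> \<kappa> \<Longrightarrow> pp \<eta> lam u > 0"
  using spos lamB by (auto simp: pp_def mem_V)


lemma Wp_fiber:
  assumes "u \<in> tree_V \<eta> \<kappa>" "N \<le> dep \<kappa> u"
  shows "(cmod (Wp (wc \<kappa> lam a) N u))\<^sup>2 = a (dep \<kappa> u) / a (dep \<kappa> u - N) * pp \<eta> lam u / pp \<eta> lam (anc N u)"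
proof -
  have A: "anc N u \<in> tree_V \<eta> \<kappa>" using anc_V[OF assms] by blast
  have X: "a (dep \<kappa> u - N) * pp \<eta> lam (anc N u) > 0"
    using apos[of "dep \<kappa> u - N"] ppos[OF A] by simp
  define W where "W = (cmod (Wp (wc \<kappa> lam a) N u))\<^sup>2"
  define Xv where "Xv = a (dep \<kappa> u - N) * pp \<eta> lam (anc N u)"
  have eq: "W * Xv = a (dep \<kappa> u) * pp \<eta> lam u"
    using TEL[OF assms] unfolding W_def Xv_def by (simp add: mult.assoc)
  have Xn: "Xv \<noteq> 0" using X unfolding Xv_def by (metis less_irrefl)
  have "W = (W * Xv) / Xv" using Xn by simp
  then have "W = a (dep \<kappa> u) * pp \<eta> lam u / Xv" using eq by simp
  then have "(cmod (Wp (wc \<kappa> lam a) N u))\<^sup>2 = a (dep \<kappa> u) * pp \<eta> lam u / (a (dep \<kappa> u - N) * pp \<eta> lam (anc N u))"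
    unfolding W_def Xv_def .
  then show ?thesis by simp
qed

lemma FIB:
  assumes vV: "v \<in> tree_V \<eta> \<kappa>"
  shows "(pp \<eta> lam has_sum pp \<eta> lam v) {u. u \<in> {u. u \<in> tree_V \<eta> \<kappa> \<and> N \<le> dep \<kappa> u} \<and> anc N u = v}"
proof (cases v)
  case (Neg k)
  then have k: "k \<le> \<kappa>" using vV by simp
  show ?thesis
  proof (cases "N \<le> k")
    case True
    show ?thesis unfolding fib_Neg_le[OF k True] Neg
      by (rule has_sum_finiteI) (auto simp: pp_def)
  next
    case False
    then have kN: "k < N" by simp
    have "((\<lambda>i. (lam (Br i 1))\<^sup>2 * inverse (sS \<eta> lam)) has_sum (sS \<eta> lam * inverse (sS \<eta> lam))) (Iset \<eta>)"
      by (rule has_sum_cmult_left) (use summ in \<open>simp add: sS_def\<close>)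
    then have "((pp \<eta> lam \<circ> (\<lambda>i. Br i (N - k))) has_sum 1) (Iset \<eta>)"
      using spos by (simp add: pp_def o_def divide_inverse)
    then have "(pp \<eta> lam has_sum 1) ((\<lambda>i. Br i (N - k)) ` Iset \<eta>)"
      by (subst has_sum_reindex) (auto simp: inj_on_def)
    then show ?thesis unfolding fib_Neg_gt[OF k kN] Neg by (simp add: pp_def)
  qed
next
  case (Br i j)
  then have i: "i \<in> Iset \<eta>" and j: "1 \<le> j" using vV by auto
  show ?thesis unfolding fib_Br[OF i j] Br
    by (rule has_sum_finiteI) (auto simp: pp_def)
qed

lemma SQ:
  assumes f0: "\<And>u. u \<notin> tree_V \<eta> \<kappa> \<Longrightarrow> f u = 0"
    and fs: "(\<lambda>u. (cmod (f u))\<^sup>2) summable_on tree_V \<eta> \<kappa>"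
  shows "((\<lambda>u. (cmod ((wshift \<eta> \<kappa> (wc \<kappa> lam a) ^^ N) f u))\<^sup>2) has_sum
           infsum (\<lambda>v. (cmod (f v))\<^sup>2 * (a (dep \<kappa> v + N) / a (dep \<kappa> v))) (tree_V \<eta> \<kappa>)) (tree_V \<eta> \<kappa>)"
    and "(\<lambda>v. (cmod (f v))\<^sup>2 * (a (dep \<kappa> v + N) / a (dep \<kappa> v))) summable_on (tree_V \<eta> \<kappa>)"
proof -
  define g where "g = (\<lambda>u. (cmod ((wshift \<eta> \<kappa> (wc \<kappa> lam a) ^^ N) f u))\<^sup>2)"
  define U where "U = {u. u \<in> tree_V \<eta> \<kappa> \<and> N \<le> dep \<kappa> u}"
  define b where "b = (\<lambda>v. (cmod (f v))\<^sup>2 * (a (dep \<kappa> v + N) / a (dep \<kappa> v)))"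
  have fibsum: "(g has_sum b v) {u. u \<in> U \<and> anc N u = v}" if vV: "v \<in> tree_V \<eta> \<kappa>" for v
  proof -
    define c where "c = a (dep \<kappa> v + N) / a (dep \<kappa> v) * (cmod (f v))\<^sup>2 / pp \<eta> lam v"
    have "((\<lambda>u. c * pp \<eta> lam u) has_sum c * pp \<eta> lam v) {u. u \<in> U \<and> anc N u = v}"
      by (rule has_sum_cmult_right) (use FIB[OF vV, of N] in \<open>simp add: U_def\<close>)
    moreover have "c * pp \<eta> lam v = b v" using ppos[OF vV] by (simp add: c_def b_def)
    moreover have "g u = c * pp \<eta> lam u" if u: "u \<in> {u. u \<in> U \<and> anc N u = v}" for u
    proof -
      have uV: "u \<in> tree_V \<eta> \<kappa>" and Nu: "N \<le> dep \<kappa> u" and av: "anc N u = v" using u by (auto simp: U_def)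
      have dv: "dep \<kappa> v = dep \<kappa> u - N" using anc_V[OF uV Nu] av by simp
      have "(wshift \<eta> \<kappa> (wc \<kappa> lam a) ^^ N) f u = Wp (wc \<kappa> lam a) N u * f (anc N u)"
        using Spow[OF f0, where w="wc \<kappa> lam a" and N=N and u=u] uV Nu by simp
      then have "g u = (cmod (Wp (wc \<kappa> lam a) N u))\<^sup>2 * (cmod (f v))\<^sup>2"
        unfolding g_def using av by (simp add: norm_mult power_mult_distrib)
      also have "\<dots> = c * pp \<eta> lam u"
        unfolding Wp_fiber[OF uV Nu] c_def av using dv Nu by simp
      finally show ?thesis .
    qed
    ultimately show ?thesis using has_sum_cong[of "{u. u \<in> U \<and> anc N u = v}" g "\<lambda>u. c * pp \<eta> lam u"] by simp
  qed
  have bs: "b summable_on tree_V \<eta> \<kappa>"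
  proof (rule summable_on_comparison_test)
    show "(\<lambda>v. a 1 ^ N * (cmod (f v))\<^sup>2) summable_on tree_V \<eta> \<kappa>" by (rule summable_on_cmult_right[OF fs])
    fix v
    have "a (dep \<kappa> v + N) \<le> a 1 ^ N * a (dep \<kappa> v)" by (rule CA_ratio[OF CA a0])
    moreover have "a (dep \<kappa> v) \<ge> 1" by (rule apos)
    ultimately have r: "a (dep \<kappa> v + N) / a (dep \<kappa> v) \<le> a 1 ^ N" by (simp add: divide_le_eq)
    have r0: "a (dep \<kappa> v + N) / a (dep \<kappa> v) \<ge> 0" using apos[of "dep \<kappa> v"] apos[of "dep \<kappa> v + N"] by simp
    have "b v = (a (dep \<kappa> v + N) / a (dep \<kappa> v)) * (cmod (f v))\<^sup>2" unfolding b_def by (simp only: mult.commute)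
    also have "\<dots> \<le> a 1 ^ N * (cmod (f v))\<^sup>2" by (rule mult_right_mono[OF r]) simp
    finally show "b v \<le> a 1 ^ N * (cmod (f v))\<^sup>2" .
    show "0 \<le> b v" unfolding b_def using r0 by (intro mult_nonneg_nonneg) simp_all
  qed
  have "(g has_sum infsum b (tree_V \<eta> \<kappa>)) U"
  proof (rule regroup[of U g "anc N" "tree_V \<eta> \<kappa>" b])
    show "\<And>u. u \<in> U \<Longrightarrow> 0 \<le> g u" by (simp add: g_def)
    show "\<And>u. u \<in> U \<Longrightarrow> anc N u \<in> tree_V \<eta> \<kappa>" using anc_V by (auto simp: U_def)
    show "\<And>v. v \<in> tree_V \<eta> \<kappa> \<Longrightarrow> (g has_sum b v) {u. u \<in> U \<and> anc N u = v}" by (rule fibsum)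
    show "b summable_on tree_V \<eta> \<kappa>" by (rule bs)
  qed
  moreover have "(g has_sum infsum b (tree_V \<eta> \<kappa>)) U \<longleftrightarrow> (g has_sum infsum b (tree_V \<eta> \<kappa>)) (tree_V \<eta> \<kappa>)"
  proof (rule has_sum_cong_neutral)
    fix x assume "x \<in> tree_V \<eta> \<kappa> - U"
    then show "g x = 0" unfolding g_def U_def
      using Spow[OF f0, where w="wc \<kappa> lam a" and N=N and u=x] by simp
  qed (auto simp: U_def)
  ultimately show "(g has_sum infsum b (tree_V \<eta> \<kappa>)) (tree_V \<eta> \<kappa>)" by simp
  show "b summable_on tree_V \<eta> \<kappa>" by (rule bs)
qed


lemma CHyp: "comp_hyperexpansive \<eta> \<kappa> (wc \<kappa> lam a)"
  unfolding comp_hyperexpansive_def completely_alternating_def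
proof (intro allI impI)
  fix f :: "vtx \<Rightarrow> complex" and m n :: nat assume ell: "ell2_vec \<eta> \<kappa> f" and n: "1 \<le> n"
  have f0: "\<And>u. u \<notin> tree_V \<eta> \<kappa> \<Longrightarrow> f u = 0" and fs: "(\<lambda>u. (cmod (f u))\<^sup>2) summable_on tree_V \<eta> \<kappa>"
    using ell unfolding ell2_vec_def by auto
  define B where "B N v = (cmod (f v))\<^sup>2 * (a (dep \<kappa> v + N) / a (dep \<kappa> v))" for N v
  have sq: "sqnorm \<eta> \<kappa> ((wshift \<eta> \<kappa> (wc \<kappa> lam a) ^^ N) f) = infsum (B N) (tree_V \<eta> \<kappa>)" for N
    using SQ(1)[OF f0 fs, of N] unfolding sqnorm_def B_def by (simp add: has_sum_iff)
  have hs: "(B N has_sum infsum (B N) (tree_V \<eta> \<kappa>)) (tree_V \<eta> \<kappa>)" for N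
    using SQ(2)[OF f0 fs, of N] unfolding B_def by simp
  have H: "((\<lambda>v. \<Sum>k\<le>n. (-1)^k * real (n choose k) * B (k + m) v) has_sum
            (\<Sum>k\<le>n. (-1)^k * real (n choose k) * infsum (B (k + m)) (tree_V \<eta> \<kappa>))) (tree_V \<eta> \<kappa>)"
    by (rule has_sum_finsum) (auto intro: has_sum_cmult_right hs)
  have Z: "((\<lambda>_. 0::real) has_sum 0) (tree_V \<eta> \<kappa>)" by simp
  have pw: "(\<Sum>k\<le>n. (-1)^k * real (n choose k) * B (k + m) v) \<le> 0" for v
  proof -
    have "(\<Sum>k\<le>n. (-1)^k * real (n choose k) * B (k + m) v)
        = (\<Sum>k\<le>n. ((cmod (f v))\<^sup>2 / a (dep \<kappa> v)) * ((-1)^k * real (n choose k) * a (k + (m + dep \<kappa> v))))"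
    proof (rule sum.cong)
      fix k
      have "dep \<kappa> v + (k + m) = k + (m + dep \<kappa> v)" by simp
      then show "(-1)^k * real (n choose k) * B (k + m) v = ((cmod (f v))\<^sup>2 / a (dep \<kappa> v)) * ((-1)^k * real (n choose k) * a (k + (m + dep \<kappa> v)))"
        unfolding B_def by (simp add: divide_inverse ac_simps)
    qed simp
    also have "\<dots> = ((cmod (f v))\<^sup>2 / a (dep \<kappa> v)) * (\<Sum>k\<le>n. (-1)^k * real (n choose k) * a (k + (m + dep \<kappa> v)))"
      by (simp add: sum_distrib_left)
    also have "\<dots> \<le> 0"
    proof (rule mult_nonneg_nonpos)
      show "0 \<le> (cmod (f v))\<^sup>2 / a (dep \<kappa> v)" using apos[of "dep \<kappa> v"] by simp
      show "(\<Sum>k\<le>n. (-1)^k * real (n choose k) * a (k + (m + dep \<kappa> v))) \<le> 0"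
        using CA n unfolding completely_alternating_def by blast
    qed
    finally show ?thesis .
  qed
  have "(\<Sum>k\<le>n. (-1)^k * real (n choose k) * infsum (B (k + m)) (tree_V \<eta> \<kappa>)) \<le> 0"
    using has_sum_mono[OF H Z] pw by blast
  then show "(\<Sum>k\<le>n. (-1)^k * real (n choose k) * sqnorm \<eta> \<kappa> ((wshift \<eta> \<kappa> (wc \<kappa> lam a) ^^ (k + m)) f)) \<le> 0"
    by (simp add: sq)
qed

lemma anc1: "anc 1 u = parent u" by (simp add: anc_Suc)

lemma BW: "bounded_weights \<eta> \<kappa> (wc \<kappa> lam a)"
  unfolding bounded_weights_def
proof (intro exI[of _ "a 1"] ballI conjI)
  fix v assume vV: "v \<in> tree_V \<eta> \<kappa>"
  have ch: "children \<eta> \<kappa> v = {u. u \<in> {u. u \<in> tree_V \<eta> \<kappa> \<and> 1 \<le> dep \<kappa> u} \<and> anc 1 u = v}"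
  proof -
    have "\<And>u. u \<in> tree_V \<eta> \<kappa> \<Longrightarrow> (u \<noteq> Neg \<kappa> \<longleftrightarrow> 1 \<le> dep \<kappa> u)" using dep0 by fastforce
    then show ?thesis unfolding children_def anc1 by auto
  qed
  define c where "c = a (dep \<kappa> v + 1) / a (dep \<kappa> v) / pp \<eta> lam v"
  have "((\<lambda>u. c * pp \<eta> lam u) has_sum c * pp \<eta> lam v) (children \<eta> \<kappa> v)"
    unfolding ch by (rule has_sum_cmult_right[OF FIB[OF vV]])
  moreover have "(cmod (wc \<kappa> lam a u))\<^sup>2 = c * pp \<eta> lam u" if u: "u \<in> children \<eta> \<kappa> v" for u
  proof -
    have uV: "u \<in> tree_V \<eta> \<kappa>" and d1: "1 \<le> dep \<kappa> u" and av: "anc 1 u = v" using u unfolding ch by auto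
    have dv: "dep \<kappa> v = dep \<kappa> u - 1" using anc_V[OF uV d1] av by simp
    have "Wp (wc \<kappa> lam a) 1 u = wc \<kappa> lam a u" by (simp add: Wp_def)
    then have "(cmod (wc \<kappa> lam a u))\<^sup>2 = a (dep \<kappa> u) / a (dep \<kappa> u - 1) * pp \<eta> lam u / pp \<eta> lam (anc 1 u)"
      using Wp_fiber[OF uV d1] by simp
    then show ?thesis unfolding c_def av using dv d1 by simp
  qed
  ultimately have hs: "((\<lambda>u. (cmod (wc \<kappa> lam a u))\<^sup>2) has_sum c * pp \<eta> lam v) (children \<eta> \<kappa> v)"
    using has_sum_cong[of "children \<eta> \<kappa> v" "\<lambda>u. (cmod (wc \<kappa> lam a u))\<^sup>2" "\<lambda>u. c * pp \<eta> lam u"] by simp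
  then show "(\<lambda>u. (cmod (wc \<kappa> lam a u))\<^sup>2) summable_on children \<eta> \<kappa> v" by (rule has_sum_imp_summable)
  have cv: "c * pp \<eta> lam v = a (dep \<kappa> v + 1) / a (dep \<kappa> v)" using ppos[OF vV] by (simp add: c_def)
  have "a (dep \<kappa> v + 1) \<le> a 1 ^ 1 * a (dep \<kappa> v)" by (rule CA_ratio[OF CA a0])
  then have "a (dep \<kappa> v + 1) / a (dep \<kappa> v) \<le> a 1" using apos[of "dep \<kappa> v"] by (simp add: divide_le_eq)
  then show "(\<Sum>\<^sub>\<infinity>u\<in>children \<eta> \<kappa> v. (cmod (wc \<kappa> lam a u))\<^sup>2) \<le> a 1"
    using hs cv by (simp add: has_sum_iff)
qed

lemma dirB: "\<exists>w. is_completion \<eta> \<kappa> lam w \<and> two_gen_flat \<eta> w \<and> comp_hyperexpansive \<eta> \<kappa> w"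
proof (intro exI conjI)
  show "is_completion \<eta> \<kappa> lam (wc \<kappa> lam a)"
    unfolding is_completion_def using BW by (simp add: wc_def)
  show "two_gen_flat \<eta> (wc \<kappa> lam a)"
    unfolding two_gen_flat_def by (simp add: wc_def)
  show "comp_hyperexpansive \<eta> \<kappa> (wc \<kappa> lam a)" by (rule CHyp)
qed

end

theorem theorem9p7:
  fixes \<kappa> :: nat and \<eta> :: enat and lam :: "vtx \<Rightarrow> real"
  assumes "\<eta> \<ge> 2"
    and "\<forall>k<\<kappa>. lam (Neg k) > 0"
    and "\<forall>i. 1 \<le> i \<and> enat i \<le> \<eta> \<longrightarrow> lam (Br i 1) > 0"
  shows "((\<exists>w. is_completion \<eta> \<kappa> lam w \<and> comp_hyperexpansive \<eta> \<kappa> w) \<longleftrightarrow>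
            ((\<lambda>i. (lam (Br i 1))\<^sup>2) summable_on {i. 1 \<le> i \<and> enat i \<le> \<eta>} \<and>
             has_CA_extension (cseq \<eta> \<kappa> lam) (\<kappa> + 1)))
       \<and> ((\<exists>w. is_completion \<eta> \<kappa> lam w \<and> comp_hyperexpansive \<eta> \<kappa> w) \<longrightarrow>
            (\<exists>w. is_completion \<eta> \<kappa> lam w \<and> two_gen_flat \<eta> w \<and> comp_hyperexpansive \<eta> \<kappa> w))"
proof -
  have QB: "\<exists>w. is_completion \<eta> \<kappa> lam w \<and> two_gen_flat \<eta> w \<and> comp_hyperexpansive \<eta> \<kappa> w"
    if Q: "(\<lambda>i. (lam (Br i 1))\<^sup>2) summable_on {i. 1 \<le> i \<and> enat i \<le> \<eta>} \<and>
             has_CA_extension (cseq \<eta> \<kappa> lam) (\<kappa> + 1)"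
  proof -
    obtain a where CA: "completely_alternating a" and ext: "\<forall>k\<le>\<kappa> + 1. a k = cseq \<eta> \<kappa> lam k"
      using Q unfolding has_CA_extension_def by blast
    show ?thesis using dirB[OF assms(1) assms(2) assms(3) _ CA ext] Q by blast
  qed
  have PA: "(\<lambda>i. (lam (Br i 1))\<^sup>2) summable_on {i. 1 \<le> i \<and> enat i \<le> \<eta>} \<and>
             has_CA_extension (cseq \<eta> \<kappa> lam) (\<kappa> + 1)"
    if P: "\<exists>w. is_completion \<eta> \<kappa> lam w \<and> comp_hyperexpansive \<eta> \<kappa> w"
    using P dirA by blast
  show ?thesis using QB PA by blast
qed

end
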